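(* Let $l,m\ge0$ be integers with $l+m\ge1$. There exist real constants $\tilde\alpha_{l,m},\tilde\beta_{l,m},\tilde\gamma_{l,m},\tilde\delta_{l,m}$ and, for each index $k$ below, real polynomials in $h$ of the indicated degrees (depending only on $l,m,k$) such that for all $h\in(0,+\infty)$, writing $w=w(h)=\frac{\sqrt{1+4h}-1}{2}$: (i) if $n=2l+2m$, then $J_{2l,2m}(h)=\tilde\gamma_{l,m}h^{[n/2]}J_{0,0}(h)+\sum_{k=2}^{n}\hat\varphi_k(h)\,w^{k+\frac12}$ with $\deg\hat\varphi_k\le[\frac{n-k}{2}]$; (ii) if $n=2l+2m+1$, then $I_{2l,2m+1}(h)=\tilde\alpha_{l,m}h^{[\frac{n-1}{2}]}I_{0,1}(h)+\sum_{k=3}^{n}\tilde\varphi_k(h)\,w^{k+\frac12}$ and $J_{2l,2m+1}(h)=\tilde\delta_{l,m}h^{[\frac{n-1}{2}]}J_{0,1}(h)+\sum_{k=3}^{n}\tilde\psi_k(h)\,w^{k+\frac12}$, with $\deg\tilde\varphi_k,\deg\tilde\psi_k\le[\frac{n-k}{2}]$; (iii) if $n=2l+2m+2$, then $I_{2l+1,2m+1}(h)=\tilde\beta_{l,m}h^{[\frac{n-2}{2}]}I_{1,1}(h)+\sum_{k=4}^{n}\check\psi_k(h)\,w^{k}$ with $\deg\check\psi_k\le[\frac{n-k}{2}]$.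
   Context: For $h>0$ let $u=\sqrt{(\sqrt{1+4h}-1)/2}$ (so $u^4+u^2=h$), $\Gamma_h$ the circle $x^2+y^2=h$, $A=(u,u^2)$, $B=(u,-u^2)$, $C=(-u,-u^2)$. Let $\widehat{AB}$ be the arc of $\Gamma_h$ traversed clockwise from $A$ to $B$ through $(\sqrt h,0)$, and $\widehat{BC}$ the arc traversed clockwise from $B$ to $C$ through $(0,-\sqrt h)$. For integers $i,j\ge0$, $I_{i,j}(h)=\int_{\widehat{AB}}x^iy^jdx$ and $J_{i,j}(h)=\int_{\widehat{BC}}x^iy^jdx$ (line integrals along the oriented arcs). $[p]$ denotes the integer part of $p$. *)

theory Defs
  imports "HOL-Analysis.Analysis" "HOL-Computational_Algebra.Polynomial"
begin

definition wfun :: "real \<Rightarrow> real" where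
  "wfun h = (sqrt (1 + 4*h) - 1) / 2"

definition ufun :: "real \<Rightarrow> real" where
  "ufun h = sqrt ((sqrt (1 + 4*h) - 1) / 2)"

text \<open>Polar angle of A = (u, u^2) on the circle x^2+y^2=h (u>0, so the angle is arctan(u^2/u)).\<close>
definition thetaA :: "real \<Rightarrow> real" where
  "thetaA h = arctan (ufun h ^ 2 / ufun h)"

definition line_int_dx :: "(real \<times> real \<Rightarrow> real) \<Rightarrow> (real \<Rightarrow> real \<times> real) \<Rightarrow> real" where
  "line_int_dx P g = integral {0..1} (\<lambda>t. P (g t) * fst (vector_derivative g (at t)))"

text \<open>Arc AB of the circle x^2+y^2=h, clockwise from A through (sqrt h,0) to B.\<close>
definition arcAB :: "real \<Rightarrow> real \<Rightarrow> real \<times> real" where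
  "arcAB h t = (let a = thetaA h - 2 * thetaA h * t in (sqrt h * cos a, sqrt h * sin a))"

text \<open>Arc BC, clockwise from B through (0,-sqrt h) to C = (-u,-u^2).\<close>
definition arcBC :: "real \<Rightarrow> real \<Rightarrow> real \<times> real" where
  "arcBC h t = (let a = - thetaA h - (pi - 2 * thetaA h) * t in (sqrt h * cos a, sqrt h * sin a))"

definition Iint :: "nat \<Rightarrow> nat \<Rightarrow> real \<Rightarrow> real" where
  "Iint i j h = line_int_dx (\<lambda>(x, y). x ^ i * y ^ j) (arcAB h)"

definition Jint :: "nat \<Rightarrow> nat \<Rightarrow> real \<Rightarrow> real" where
  "Jint i j h = line_int_dx (\<lambda>(x, y). x ^ i * y ^ j) (arcBC h)"

end

theory Submission
  imports Defs
begin


lemma line_int_arc: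
  fixes \<Phi> :: "real \<Rightarrow> real" and h \<alpha> \<beta> :: real
  assumes h: "h > 0"
    and D: "\<And>a. (\<Phi> has_real_derivative (cos a ^ i * sin a ^ (j+1))) (at a)"
  shows "line_int_dx (\<lambda>(x, y). x ^ i * y ^ j) (\<lambda>t. (sqrt h * cos (\<alpha> + \<beta>*t), sqrt h * sin (\<alpha> + \<beta>*t)))
     = sqrt h ^ (i+j+1) * (\<Phi> \<alpha> - \<Phi> (\<alpha> + \<beta>))"
proof -
  let ?g = "\<lambda>t. (sqrt h * cos (\<alpha> + \<beta>*t), sqrt h * sin (\<alpha> + \<beta>*t))"
  have vd: "vector_derivative ?g (at t) = (- sqrt h * sin (\<alpha> + \<beta>*t) * \<beta>, sqrt h * cos (\<alpha> + \<beta>*t) * \<beta>)" for t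
    apply (rule vector_derivative_at)
    apply (rule has_vector_derivative_Pair)
    unfolding has_real_derivative_iff_has_vector_derivative[symmetric]
    by (auto intro!: derivative_eq_intros)
  let ?F = "\<lambda>t. - (sqrt h ^ (i+j+1) * \<Phi> (\<alpha> + \<beta>*t))"
  have der: "(?F has_real_derivative (case ?g t of (x, y) \<Rightarrow> x ^ i * y ^ j) * fst (vector_derivative ?g (at t))) (at t)" for t
  proof -
    have "(?F has_real_derivative - (sqrt h ^ (i+j+1) * ((cos (\<alpha> + \<beta>*t) ^ i * sin (\<alpha> + \<beta>*t) ^ (j+1)) * \<beta>))) (at t)"
      by (auto intro!: derivative_eq_intros DERIV_chain2[OF D])
    moreover have "- (sqrt h ^ (i+j+1) * ((cos (\<alpha> + \<beta>*t) ^ i * sin (\<alpha> + \<beta>*t) ^ (j+1)) * \<beta>))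
       = (case ?g t of (x, y) \<Rightarrow> x ^ i * y ^ j) * fst (vector_derivative ?g (at t))"
      unfolding vd by (simp add: power_mult_distrib power_add algebra_simps)
    ultimately show ?thesis by simp
  qed
  have "((\<lambda>t. (case ?g t of (x, y) \<Rightarrow> x ^ i * y ^ j) * fst (vector_derivative ?g (at t))) has_integral (?F 1 - ?F 0)) {0..1}"
    apply (rule fundamental_theorem_of_calculus)
     apply simp
    using der unfolding has_real_derivative_iff_has_vector_derivative
    by (blast intro: has_vector_derivative_at_within)
  from integral_unique[OF this] show ?thesis unfolding line_int_dx_def
    by (simp add: algebra_simps)
qed


definition Cls :: "nat \<Rightarrow> nat \<Rightarrow> (real \<Rightarrow> real) set" where
  "Cls lo hi = {f. \<exists>c. \<forall>x. f x = (\<Sum>k=lo..hi. c k * x ^ k)}"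

lemma Cls_zero: "(\<lambda>x. 0) \<in> Cls lo hi"
  unfolding Cls_def by (rule CollectI, rule exI[of _ "\<lambda>_. 0"]) simp

lemma Cls_add: "f \<in> Cls lo hi \<Longrightarrow> g \<in> Cls lo hi \<Longrightarrow> (\<lambda>x. f x + g x) \<in> Cls lo hi"
  unfolding Cls_def
  apply clarify
  subgoal for c d by (rule exI[of _ "\<lambda>k. c k + d k"]) (simp add: sum.distrib algebra_simps)
  done

lemma Cls_smult: "f \<in> Cls lo hi \<Longrightarrow> (\<lambda>x. a * f x) \<in> Cls lo hi"
  unfolding Cls_def
  apply clarify
  subgoal for c by (rule exI[of _ "\<lambda>k. a * c k"]) (simp add: sum_distrib_left algebra_simps)
  done

lemma Cls_diff: "f \<in> Cls lo hi \<Longrightarrow> g \<in> Cls lo hi \<Longrightarrow> (\<lambda>x. f x - g x) \<in> Cls lo hi"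
  using Cls_add[of f lo hi "\<lambda>x. (-1) * g x"] Cls_smult[of g lo hi "-1"] by simp

lemma Cls_mono: assumes "f \<in> Cls lo hi" "lo' \<le> lo" "hi \<le> hi'" shows "f \<in> Cls lo' hi'"
proof -
  obtain c where c: "\<And>x. f x = (\<Sum>k=lo..hi. c k * x ^ k)" using assms(1) unfolding Cls_def by blast
  have "f x = (\<Sum>k=lo'..hi'. (if k \<in> {lo..hi} then c k else 0) * x ^ k)" for x
  proof -
    have "(\<Sum>k=lo'..hi'. (if k \<in> {lo..hi} then c k else 0) * x ^ k) = (\<Sum>k\<in>{lo'..hi'}. if k \<in> {lo..hi} then c k * x ^ k else 0)"
      by (intro sum.cong) auto
    also have "\<dots> = (\<Sum>k\<in>{lo'..hi'} \<inter> {lo..hi}. c k * x ^ k)"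
      by (rule sum.inter_restrict[symmetric]) simp
    also have "{lo'..hi'} \<inter> {lo..hi} = {lo..hi}" using assms by auto
    finally show ?thesis using c by simp
  qed
  then show ?thesis unfolding Cls_def by (intro CollectI exI[of _ "\<lambda>k. if k \<in> {lo..hi} then c k else 0"]) blast
qed

lemma Cls_sum: "finite S \<Longrightarrow> (\<And>i. i \<in> S \<Longrightarrow> g i \<in> Cls lo hi) \<Longrightarrow> (\<lambda>x. \<Sum>i\<in>S. g i x) \<in> Cls lo hi"
proof (induction S rule: finite_induct)
  case empty then show ?case using Cls_zero by simp
next
  case (insert a S)
  then show ?case using Cls_add[of "g a" lo hi "\<lambda>x. \<Sum>i\<in>S. g i x"] by simp
qed

lemma Cls_xpow: "(\<lambda>x. x ^ a) \<in> Cls a a"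
  unfolding Cls_def by (rule CollectI, rule exI[of _ "\<lambda>_. 1"]) simp

lemma Cls_mulx: "f \<in> Cls lo hi \<Longrightarrow> (\<lambda>x. x * f x) \<in> Cls (Suc lo) (Suc hi)"
  unfolding Cls_def
  apply clarify
  subgoal for c
    apply (rule exI[of _ "\<lambda>k. c (k - 1)"])
    apply (simp only: sum.shift_bounds_cl_Suc_ivl)
    apply (simp add: sum_distrib_left algebra_simps)
    done
  done

lemma Cls_mul1px: "f \<in> Cls lo hi \<Longrightarrow> (\<lambda>x. (1 + x) * f x) \<in> Cls lo (Suc hi)"
proof -
  assume f: "f \<in> Cls lo hi"
  have "(\<lambda>x. f x + x * f x) \<in> Cls lo (Suc hi)"
    apply (rule Cls_add)
    using Cls_mono[OF f] apply simp
    using Cls_mono[OF Cls_mulx[OF f]] by simp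
  then show ?thesis by (simp add: algebra_simps)
qed

lemma Cls_xpow1p: "(\<lambda>x. x ^ a * (1 + x) ^ b) \<in> Cls a (a + b)"
proof (induction b)
  case 0 then show ?case using Cls_xpow by simp
next
  case (Suc b)
  from Cls_mul1px[OF this] show ?case by (simp add: algebra_simps)
qed

lemma Cls_low: "(\<lambda>x. x ^ a * (1 + x) ^ b - x ^ a) \<in> Cls (Suc a) (a + b)"
proof (induction b)
  case 0 then show ?case using Cls_zero by simp
next
  case (Suc b)
  have e: "(\<lambda>x::real. x ^ a * (1 + x) ^ Suc b - x ^ a) = (\<lambda>x. (1 + x) * (x ^ a * (1 + x) ^ b - x ^ a) + x ^ Suc a)"
    by (rule ext) (simp add: algebra_simps)
  show ?case unfolding e
    apply (rule Cls_add)
    using Cls_mul1px[OF Suc.IH] apply simp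
    using Cls_mono[OF Cls_xpow[of "Suc a"]] by simp
qed

lemma Cls_top: "(\<lambda>x. x ^ a * (1 + x) ^ Suc b - x ^ (a + Suc b)) \<in> Cls a (a + b)"
proof (induction b)
  case 0
  have e: "(\<lambda>x::real. x ^ a * (1 + x) ^ Suc 0 - x ^ (a + Suc 0)) = (\<lambda>x. x ^ a)" by (rule ext) (simp add: algebra_simps)
  show ?case unfolding e using Cls_xpow by simp
next
  case (Suc b)
  have e: "(\<lambda>x::real. x ^ a * (1 + x) ^ Suc (Suc b) - x ^ (a + Suc (Suc b))) = (\<lambda>x. x ^ a * (1 + x) ^ Suc b + x * (x ^ a * (1 + x) ^ Suc b - x ^ (a + Suc b)))"
    by (rule ext) (simp add: algebra_simps)
  show ?case unfolding e
    apply (rule Cls_add)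
    using Cls_mono[OF Cls_xpow1p[of a "Suc b"]] apply simp
    using Cls_mono[OF Cls_mulx[OF Suc.IH]] by simp
qed

lemma Cls_final:
  assumes "f \<in> Cls lo hi"
  shows "\<exists>c. \<forall>x. f x = (\<Sum>k=lo..hi. c k * x ^ k)"
  using assms unfolding Cls_def by blast



lemma basics:
  assumes h: "h > 0"
  shows "wfun h > 0" "ufun h = sqrt (wfun h)" "h = wfun h * (1 + wfun h)"
    "thetaA h = arctan (ufun h)" "sqrt h * cos (thetaA h) = ufun h"
    "sqrt h * sin (thetaA h) = wfun h" "ufun h > 0" "ufun h ^ 2 = wfun h"
proof -
  define r where "r = sqrt (1 + 4*h)"
  have r2: "r^2 = 1 + 4*h" using h by (simp add: r_def)
  have r1: "r > 1" using h unfolding r_def by (simp add: real_less_rsqrt)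
  have w: "wfun h = (r - 1)/2" by (simp add: wfun_def r_def)
  show wp: "wfun h > 0" using r1 w by simp
  show u: "ufun h = sqrt (wfun h)" by (simp add: ufun_def wfun_def)
  show hw: "h = wfun h * (1 + wfun h)" using r2 unfolding w by (simp add: field_simps power2_eq_square) 
  show up: "ufun h > 0" using u wp by simp
  show u2: "ufun h ^ 2 = wfun h" using u wp by simp
  show th: "thetaA h = arctan (ufun h)" unfolding thetaA_def using up by (simp add: power2_eq_square)
  have sh: "sqrt h = ufun h * sqrt (1 + wfun h)"
    using hw u wp by (metis real_sqrt_mult)
  have e1: "1 + ufun h ^ 2 = 1 + wfun h" using u2 by simp
  have pos: "sqrt (1 + wfun h) > 0" using wp by simp
  show "sqrt h * cos (thetaA h) = ufun h"
    unfolding th cos_arctan e1 sh using pos by simp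
  show "sqrt h * sin (thetaA h) = wfun h"
    unfolding th sin_arctan e1 sh using pos u2 by (simp add: power2_eq_square)
qed

lemma arcAB_eq: "arcAB h = (\<lambda>t. (sqrt h * cos (thetaA h + (-2*thetaA h)*t), sqrt h * sin (thetaA h + (-2*thetaA h)*t)))"
  unfolding arcAB_def by (rule ext) (simp add: Let_def algebra_simps)

lemma arcBC_eq: "arcBC h = (\<lambda>t. (sqrt h * cos (- thetaA h + (-(pi - 2*thetaA h))*t), sqrt h * sin (- thetaA h + (-(pi - 2*thetaA h))*t)))"
  unfolding arcBC_def by (rule ext) (simp add: Let_def algebra_simps)

lemma sqrt_pow_split:
  assumes "h \<ge> 0"
  shows "sqrt h ^ (2*e + p + q) * C ^ p * S ^ q = h ^ e * (sqrt h * C) ^ p * (sqrt h * S) ^ q"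
proof -
  have "sqrt h ^ (2*e) = h ^ e" using assms by (simp add: power_mult)
  then show ?thesis by (simp add: power_add power_mult_distrib algebra_simps)
qed

lemma upow: fixes U W :: real assumes "U ^ 2 = W" shows "U ^ p = W ^ (p div 2) * U ^ (p mod 2)"
proof -
  have "U ^ p = U ^ (2 * (p div 2) + p mod 2)" by simp
  also have "\<dots> = W ^ (p div 2) * U ^ (p mod 2)" unfolding power_add power_mult assms ..
  finally show ?thesis .
qed



lemma sin_pow_odd: "sin a ^ (2*m+1) = (\<Sum>r\<le>m. real (m choose r) * (-1)^r * cos a ^ (2*r)) * sin a"
proof -
  have "sin a ^ (2*m+1) = (sin a ^ 2) ^ m * sin a" by (simp add: power_mult power_add)
  also have "sin a ^ 2 = (- (cos a ^ 2)) + 1" using sin_cos_squared_add[of a] by linarith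
  also have "((- (cos a ^ 2)) + 1) ^ m = (\<Sum>r\<le>m. real (m choose r) * (- (cos a ^ 2)) ^ r * 1 ^ (m - r))"
    by (rule binomial_ring)
  also have "\<dots> = (\<Sum>r\<le>m. real (m choose r) * (-1)^r * cos a ^ (2*r))"
    by (intro sum.cong refl) (simp add: power_mult flip: power_minus)
  finally show ?thesis .
qed

lemma cos_pow_even: "cos a ^ (2*l) = (\<Sum>r\<le>l. real (l choose r) * (-1)^r * sin a ^ (2*r))"
proof -
  have "cos a ^ (2*l) = (cos a ^ 2) ^ l" by (simp add: power_mult)
  also have "cos a ^ 2 = (- (sin a ^ 2)) + 1" using sin_cos_squared_add[of a] by linarith
  also have "((- (sin a ^ 2)) + 1) ^ l = (\<Sum>r\<le>l. real (l choose r) * (- (sin a ^ 2)) ^ r * 1 ^ (l - r))"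
    by (rule binomial_ring)
  also have "\<dots> = (\<Sum>r\<le>l. real (l choose r) * (-1)^r * sin a ^ (2*r))"
    by (intro sum.cong refl) (simp add: power_mult flip: power_minus)
  finally show ?thesis .
qed

lemma dcos: "((\<lambda>a. cos a ^ (n+1)) has_real_derivative (real (n+1) * cos a ^ n * (- sin a))) (at a)"
  using DERIV_power[OF DERIV_cos[of a], of "Suc n"] by (simp add: ac_simps)
lemma dsin: "((\<lambda>a. sin a ^ (n+1)) has_real_derivative (real (n+1) * sin a ^ n * cos a)) (at a)"
  using DERIV_power[OF DERIV_sin[of a], of "Suc n"] by (simp add: ac_simps)

definition Phi1 :: "nat \<Rightarrow> nat \<Rightarrow> real \<Rightarrow> real" where
  "Phi1 l m a = - (\<Sum>r\<le>m. real (m choose r) * (-1)^r * cos a ^ (2*l+2*r+1) / real (2*l+2*r+1))"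

lemma Phi1_deriv: "(Phi1 l m has_real_derivative (cos a ^ (2*l) * sin a ^ (2*m+1))) (at a)"
proof -
  have d: "(Phi1 l m has_real_derivative - (\<Sum>r\<le>m. real (m choose r) * (-1)^r * (real (2*l+2*r+1) * cos a ^ (2*l+2*r) * (- sin a)) / real (2*l+2*r+1))) (at a)"
    unfolding Phi1_def[abs_def]
    by (intro DERIV_minus DERIV_sum DERIV_cdivide DERIV_cmult dcos)
  have "- (\<Sum>r\<le>m. real (m choose r) * (-1)^r * (real (2*l+2*r+1) * cos a ^ (2*l+2*r) * (- sin a)) / real (2*l+2*r+1))
     = (\<Sum>r\<le>m. cos a ^ (2*l) * (real (m choose r) * (-1)^r * cos a ^ (2*r) * sin a))"
    unfolding sum_negf[symmetric]
    by (intro sum.cong refl) (simp add: power_add del: of_nat_add of_nat_Suc)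
  also have "\<dots> = cos a ^ (2*l) * ((\<Sum>r\<le>m. real (m choose r) * (-1)^r * cos a ^ (2*r)) * sin a)"
    by (simp add: sum_distrib_left sum_distrib_right)
  also have "\<dots> = cos a ^ (2*l) * sin a ^ (2*m+1)" by (simp only: sin_pow_odd)
  finally show ?thesis using d by simp
qed



lemma sqrt_pow_split1:
  assumes "h \<ge> 0"
  shows "sqrt h ^ (2*e + p) * C ^ p = h ^ e * (sqrt h * C) ^ p"
  using sqrt_pow_split[OF assms, of e p 0 C 1] by simp

definition k1 :: "nat \<Rightarrow> nat \<Rightarrow> nat \<Rightarrow> real" where
  "k1 l m r = -2 * real (m choose r) * (-1)^r / real (2*l+2*r+1)"

lemma Jint_even:
  assumes h: "h > 0"
  shows "Jint (2*l) (2*m) h = ufun h * (\<Sum>r\<le>m. k1 l m r * wfun h ^ (l+m) * (1 + wfun h) ^ (m-r))"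
proof -
  define \<theta> where "\<theta> = thetaA h"
  define w where "w = wfun h"
  define u where "u = ufun h"
  note B = basics[OF h, folded \<theta>_def w_def u_def]
  have "Jint (2*l) (2*m) h = sqrt h ^ (2*l+2*m+1) * (Phi1 l m (-\<theta>) - Phi1 l m (-\<theta> + -(pi - 2*\<theta>)))"
    unfolding Jint_def arcBC_eq \<theta>_def
    by (rule line_int_arc[OF h], rule Phi1_deriv)
  also have "-\<theta> + -(pi - 2*\<theta>) = \<theta> - pi" by simp
  also have "Phi1 l m (-\<theta>) - Phi1 l m (\<theta> - pi) = (\<Sum>r\<le>m. k1 l m r * cos \<theta> ^ (2*l+2*r+1))"
    unfolding Phi1_def k1_def
    by (simp add: cos_diff sum_negf[symmetric] sum_subtractf[symmetric] power_minus_odd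
        del: of_nat_add of_nat_Suc, intro sum.cong refl, simp add: field_simps)
  also have "sqrt h ^ (2*l+2*m+1) * (\<Sum>r\<le>m. k1 l m r * cos \<theta> ^ (2*l+2*r+1))
      = (\<Sum>r\<le>m. k1 l m r * (sqrt h ^ (2*(m-r) + (2*l+2*r+1)) * cos \<theta> ^ (2*l+2*r+1)))"
    by (simp add: sum_distrib_left algebra_simps)
  also have "\<dots> = (\<Sum>r\<le>m. k1 l m r * (h ^ (m-r) * u ^ (2*l+2*r+1)))"
    by (intro sum.cong refl) (simp only: sqrt_pow_split1[of h, OF less_imp_le[OF h]] B(5))
  also have "\<dots> = u * (\<Sum>r\<le>m. k1 l m r * w ^ (l+m) * (1 + w) ^ (m-r))"
  proof -
    have T0: "h ^ (m-r) * u ^ (2*l+2*r+1) = u * (w ^ (l+m) * (1 + w) ^ (m-r))" if "r \<le> m" for r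
    proof -
      have "u ^ (2*l+2*r+1) = w ^ (l+r) * u" using B(8) by (simp add: power_add power_mult)
      moreover have "w ^ (l+r) * w ^ (m-r) = w ^ (l+m)" using that by (simp flip: power_add)
      moreover have "h ^ (m-r) = w ^ (m-r) * (1+w) ^ (m-r)" using B(3) by (metis power_mult_distrib)
      ultimately show ?thesis by (metis (no_types, lifting) mult.assoc mult.commute)
    qed
    have T: "k1 l m r * (h ^ (m-r) * u ^ (2*l+2*r+1)) = u * (k1 l m r * w ^ (l+m) * (1 + w) ^ (m-r))" if "r \<le> m" for r
      using T0[OF that] by simp
    show ?thesis unfolding sum_distrib_left
      by (intro sum.cong refl) (rule T, simp)
  qed
  finally show ?thesis unfolding w_def u_def .
qed



lemma powr_half: "w > 0 \<Longrightarrow> w powr (real k + 1/2) = w ^ k * sqrt w"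
  by (simp add: powr_add powr_realpow powr_half_sqrt)

lemma finalize_half:
  assumes "F \<in> Cls lo hi"
  shows "\<exists>phi::nat\<Rightarrow>real poly. (\<forall>k. degree (phi k) = 0) \<and>
     (\<forall>h>0. ufun h * F (wfun h) = (\<Sum>k=lo..hi. poly (phi k) h * wfun h powr (real k + 1/2)))"
proof -
  obtain c where c: "\<And>x. F x = (\<Sum>k=lo..hi. c k * x ^ k)" using assms unfolding Cls_def by blast
  show ?thesis
  proof (intro exI[of _ "\<lambda>k. [:c k:]"] conjI allI impI)
    fix h :: real assume h: "h > 0"
    have w: "wfun h > 0" "ufun h = sqrt (wfun h)" using basics[OF h] by auto
    show "ufun h * F (wfun h) = (\<Sum>k=lo..hi. poly [:c k:] h * wfun h powr (real k + 1/2))"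
      unfolding c sum_distrib_left using w by (intro sum.cong refl) (simp add: powr_half)
  qed simp
qed

lemma finalize_int:
  assumes "F \<in> Cls lo hi"
  shows "\<exists>phi::nat\<Rightarrow>real poly. (\<forall>k. degree (phi k) = 0) \<and>
     (\<forall>h>0. F (wfun h) = (\<Sum>k=lo..hi. poly (phi k) h * wfun h ^ k))"
proof -
  obtain c where c: "\<And>x. F x = (\<Sum>k=lo..hi. c k * x ^ k)" using assms unfolding Cls_def by blast
  show ?thesis
    by (intro exI[of _ "\<lambda>k. [:c k:]"] conjI allI impI) (simp_all add: c)
qed

lemma part1:
  assumes L: "l + m \<ge> 1"
  shows "\<exists>(ga::real) (phihat :: nat \<Rightarrow> real poly).
     (\<forall>k\<in>{2..2*l+2*m}. degree (phihat k) \<le> (2*l+2*m - k) div 2) \<and>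
     (\<forall>h::real. h > 0 \<longrightarrow>
        Jint (2*l) (2*m) h = ga * h ^ ((2*l+2*m) div 2) * Jint 0 0 h
          + (\<Sum>k=2..2*l+2*m. poly (phihat k) h * wfun h powr (real k + 1/2)))"
proof -
  define S where "S = (\<Sum>r\<le>m. k1 l m r)"
  define F where "F = (\<lambda>x::real. (\<Sum>r\<le>m. k1 l m r * (x ^ (l+m) * (1 + x) ^ (m-r) - x ^ (l+m)))
      - S * (x ^ (l+m) * (1 + x) ^ (l+m) - x ^ (l+m)))"
  have FC: "F \<in> Cls 2 (2*l+2*m)"
  proof -
    have "F \<in> Cls (Suc (l+m)) (2*l+2*m)"
      unfolding F_def
      apply (rule Cls_diff)
       apply (rule Cls_sum, simp)
       apply (rule Cls_smult)
       apply (rule Cls_mono[OF Cls_low], simp, simp)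
      apply (rule Cls_smult)
      apply (rule Cls_mono[OF Cls_low], simp, simp)
      done
    then show ?thesis by (rule Cls_mono) (use L in auto)
  qed
  obtain phi :: "nat \<Rightarrow> real poly" where phi: "\<forall>k. degree (phi k) = 0"
    "\<forall>h>0. ufun h * F (wfun h) = (\<Sum>k=2..2*l+2*m. poly (phi k) h * wfun h powr (real k + 1/2))"
    using finalize_half[OF FC] by blast
  show ?thesis
  proof (intro exI[of _ "- S / 2"] exI[of _ phi] conjI ballI allI impI)
    fix k show "degree (phi k) \<le> (2*l+2*m - k) div 2" using phi(1) by simp
  next
    fix h :: real assume h: "h > 0"
    define w where "w = wfun h"
    define u where "u = ufun h"
    have hw: "h = w * (1 + w)" using basics(3)[OF h] unfolding w_def .
    have J00: "Jint 0 0 h = u * (-2)" using Jint_even[OF h, of 0 0] by (simp add: k1_def u_def)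
    have J: "Jint (2*l) (2*m) h = u * (\<Sum>r\<le>m. k1 l m r * w ^ (l+m) * (1 + w) ^ (m-r))"
      using Jint_even[OF h] unfolding w_def u_def .
    have "Jint (2*l) (2*m) h = (- S / 2) * h ^ ((2*l+2*m) div 2) * Jint 0 0 h + u * F w"
    proof -
      have hL: "h ^ ((2*l+2*m) div 2) = w ^ (l+m) * (1 + w) ^ (l+m)"
        unfolding hw by (simp add: power_mult_distrib)
      have "(\<Sum>r\<le>m. k1 l m r * (w ^ (l+m) * (1 + w) ^ (m-r) - w ^ (l+m)))
          = (\<Sum>r\<le>m. k1 l m r * w ^ (l+m) * (1 + w) ^ (m-r)) - S * w ^ (l+m)"
        unfolding S_def by (simp add: sum_subtractf sum_distrib_left sum_distrib_right algebra_simps)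
      then show ?thesis unfolding J J00 hL F_def by (simp add: algebra_simps)
    qed
    then show "Jint (2*l) (2*m) h = (- S / 2) * h ^ ((2*l+2*m) div 2) * Jint 0 0 h
          + (\<Sum>k=2..2*l+2*m. poly (phi k) h * wfun h powr (real k + 1/2))"
      using phi(2) h unfolding w_def u_def by simp
  qed
qed



lemma Cls_top2:
  assumes "a + b = Suc N" "lo \<le> a"
  shows "(\<lambda>x. x ^ a * (1 + x) ^ b - x ^ (Suc N)) \<in> Cls lo N"
proof (cases b)
  case 0
  then have "(\<lambda>x::real. x ^ a * (1 + x) ^ b - x ^ (Suc N)) = (\<lambda>x. 0)" using assms by auto
  then show ?thesis using Cls_zero by simp
next
  case (Suc b')
  have "(\<lambda>x. x ^ a * (1 + x) ^ Suc b' - x ^ (a + Suc b')) \<in> Cls a (a + b')" by (rule Cls_top)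
  then show ?thesis using assms Suc by (auto elim!: Cls_mono)
qed

definition Phi3 :: "nat \<Rightarrow> nat \<Rightarrow> real \<Rightarrow> real" where
  "Phi3 l m a = (\<Sum>r\<le>l. real (l choose r) * (-1)^r * sin a ^ (2*m+2*r+2+1) / real (2*m+2*r+2+1))"

lemma Phi3_deriv: "(Phi3 l m has_real_derivative (cos a ^ (2*l+1) * sin a ^ (2*m+1+1))) (at a)"
proof -
  have d: "(Phi3 l m has_real_derivative (\<Sum>r\<le>l. real (l choose r) * (-1)^r * (real (2*m+2*r+2+1) * sin a ^ (2*m+2*r+2) * cos a) / real (2*m+2*r+2+1))) (at a)"
    unfolding Phi3_def[abs_def]
    by (intro DERIV_sum DERIV_cdivide DERIV_cmult dsin)
  have "(\<Sum>r\<le>l. real (l choose r) * (-1)^r * (real (2*m+2*r+2+1) * sin a ^ (2*m+2*r+2) * cos a) / real (2*m+2*r+2+1))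
     = (\<Sum>r\<le>l. sin a ^ (2*m+2) * cos a * (real (l choose r) * (-1)^r * sin a ^ (2*r)))"
    by (intro sum.cong refl) (simp add: power_add del: of_nat_add of_nat_Suc)
  also have "\<dots> = sin a ^ (2*m+2) * cos a * (\<Sum>r\<le>l. real (l choose r) * (-1)^r * sin a ^ (2*r))"
    by (simp add: sum_distrib_left)
  also have "\<dots> = cos a ^ (2*l+1) * sin a ^ (2*m+1+1)" by (simp only: cos_pow_even[symmetric]) (simp add: power_add)
  finally show ?thesis using d by simp
qed

definition k3 :: "nat \<Rightarrow> nat \<Rightarrow> nat \<Rightarrow> real" where
  "k3 l m r = 2 * real (l choose r) * (-1)^r / real (2*m+2*r+3)"

lemma Iint_odd:
  assumes h: "h > 0"
  shows "Iint (2*l+1) (2*m+1) h = (\<Sum>r\<le>l. k3 l m r * wfun h ^ (2*m+l+r+3) * (1 + wfun h) ^ (l-r))"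
proof -
  define \<theta> where "\<theta> = thetaA h"
  define w where "w = wfun h"
  note B = basics[OF h, folded \<theta>_def w_def]
  have "Iint (2*l+1) (2*m+1) h = sqrt h ^ ((2*l+1)+(2*m+1)+1) * (Phi3 l m \<theta> - Phi3 l m (\<theta> + (-2*\<theta>)))"
    unfolding Iint_def arcAB_eq \<theta>_def
    by (rule line_int_arc[OF h], rule Phi3_deriv)
  also have "\<theta> + (-2*\<theta>) = - \<theta>" by simp
  also have "Phi3 l m \<theta> - Phi3 l m (- \<theta>) = (\<Sum>r\<le>l. k3 l m r * sin \<theta> ^ (2*m+2*r+3))"
    unfolding Phi3_def k3_def
    by (simp add: sum_subtractf[symmetric] power_minus_odd
        del: of_nat_add of_nat_Suc, intro sum.cong refl, simp add: field_simps power_add power3_eq_cube)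
  also have "sqrt h ^ ((2*l+1)+(2*m+1)+1) * (\<Sum>r\<le>l. k3 l m r * sin \<theta> ^ (2*m+2*r+3))
      = (\<Sum>r\<le>l. k3 l m r * (sqrt h ^ (2*(l-r) + (2*m+2*r+3)) * sin \<theta> ^ (2*m+2*r+3)))"
    unfolding sum_distrib_left
  proof (intro sum.cong refl)
    fix r assume "r \<in> {..l}"
    then have e: "(2*l+1)+(2*m+1)+1 = 2*(l-r) + (2*m+2*r+3)" by simp
    then show "sqrt h ^ ((2*l+1)+(2*m+1)+1) * (k3 l m r * sin \<theta> ^ (2*m+2*r+3)) =
      k3 l m r * (sqrt h ^ (2*(l-r) + (2*m+2*r+3)) * sin \<theta> ^ (2*m+2*r+3))" by (simp only: e mult.left_commute)
  qed
  also have "\<dots> = (\<Sum>r\<le>l. k3 l m r * (h ^ (l-r) * w ^ (2*m+2*r+3)))"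
    by (intro sum.cong refl) (simp only: sqrt_pow_split1[of h, OF less_imp_le[OF h]] B(6))
  also have "\<dots> = (\<Sum>r\<le>l. k3 l m r * w ^ (2*m+l+r+3) * (1 + w) ^ (l-r))"
  proof (intro sum.cong refl)
    fix r assume "r \<in> {..l}"
    then have "l - r + (2*m+2*r+3) = 2*m+l+r+3" by simp
    then have e: "w ^ (l-r) * w ^ (2*m+2*r+3) = w ^ (2*m+l+r+3)" by (metis power_add)
    have "h ^ (l-r) = w ^ (l-r) * (1+w) ^ (l-r)" using B(3) by (metis power_mult_distrib)
    then show "k3 l m r * (h ^ (l-r) * w ^ (2*m+2*r+3)) = k3 l m r * w ^ (2*m+l+r+3) * (1 + w) ^ (l-r)"
      using e by (metis (no_types, lifting) mult.assoc mult.commute)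
  qed
  finally show ?thesis unfolding w_def .
qed

lemma part3:
  assumes L: "l + m \<ge> 1"
  shows "\<exists>(be::real) (psic :: nat \<Rightarrow> real poly).
     (\<forall>k\<in>{4..2*l+2*m+2}. degree (psic k) \<le> (2*l+2*m+2 - k) div 2) \<and>
     (\<forall>h::real. h > 0 \<longrightarrow>
        Iint (2*l+1) (2*m+1) h = be * h ^ ((2*l+2*m+2 - 2) div 2) * Iint 1 1 h
          + (\<Sum>k=4..2*l+2*m+2. poly (psic k) h * wfun h ^ k))"
proof -
  define S where "S = (\<Sum>r\<le>l. k3 l m r)"
  define F where "F = (\<lambda>x::real. (\<Sum>r\<le>l. k3 l m r * (x ^ (2*m+l+r+3) * (1 + x) ^ (l-r) - x ^ (Suc (2*l+2*m+2))))
      - S * (x ^ (l+m+3) * (1 + x) ^ (l+m) - x ^ (Suc (2*l+2*m+2))))"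
  have FC: "F \<in> Cls 4 (2*l+2*m+2)"
    unfolding F_def
    apply (rule Cls_diff)
     apply (rule Cls_sum, simp)
     apply (rule Cls_smult)
     apply (rule Cls_top2)
    using L apply auto[2]
    apply (rule Cls_smult)
    apply (rule Cls_top2)
    using L apply auto
    done
  obtain phi :: "nat \<Rightarrow> real poly" where phi: "\<forall>k. degree (phi k) = 0"
    "\<forall>h>0. F (wfun h) = (\<Sum>k=4..2*l+2*m+2. poly (phi k) h * wfun h ^ k)"
    using finalize_int[OF FC] by blast
  show ?thesis
  proof (intro exI[of _ "3 * S / 2"] exI[of _ phi] conjI ballI allI impI)
    fix k show "degree (phi k) \<le> (2*l+2*m+2 - k) div 2" using phi(1) by simp
  next
    fix h :: real assume h: "h > 0"
    define w where "w = wfun h"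
    have hw: "h = w * (1 + w)" using basics(3)[OF h] unfolding w_def .
    have I11: "Iint 1 1 h = 2/3 * w ^ 3" using Iint_odd[OF h, of 0 0] by (simp add: k3_def w_def)
    have I: "Iint (2*l+1) (2*m+1) h = (\<Sum>r\<le>l. k3 l m r * w ^ (2*m+l+r+3) * (1 + w) ^ (l-r))"
      using Iint_odd[OF h] unfolding w_def .
    have "Iint (2*l+1) (2*m+1) h = (3 * S / 2) * h ^ ((2*l+2*m+2 - 2) div 2) * Iint 1 1 h + F w"
    proof -
      have hL: "h ^ ((2*l+2*m+2 - 2) div 2) = w ^ (l+m) * (1 + w) ^ (l+m)"
        unfolding hw by (simp add: power_mult_distrib)
      have "(\<Sum>r\<le>l. k3 l m r * (w ^ (2*m+l+r+3) * (1 + w) ^ (l-r) - w ^ (Suc (2*l+2*m+2))))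
          = (\<Sum>r\<le>l. k3 l m r * w ^ (2*m+l+r+3) * (1 + w) ^ (l-r)) - S * w ^ (Suc (2*l+2*m+2))"
        unfolding S_def by (simp add: sum_subtractf sum_distrib_left sum_distrib_right algebra_simps)
      moreover have "w ^ (l+m) * w ^ 3 = w ^ (l+m+3)" by (simp flip: power_add)
      ultimately show ?thesis unfolding I I11 hL F_def by (simp add: algebra_simps)
    qed
    then show "Iint (2*l+1) (2*m+1) h = (3 * S / 2) * h ^ ((2*l+2*m+2 - 2) div 2) * Iint 1 1 h
          + (\<Sum>k=4..2*l+2*m+2. poly (phi k) h * wfun h ^ k)"
      using phi(2) h unfolding w_def by simp
  qed
qed



primrec kap :: "nat \<Rightarrow> real" where
  "kap 0 = 1"
| "kap (Suc k) = (2*real k+1)/(2*real k+2) * kap k"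

primrec pc :: "nat \<Rightarrow> nat \<Rightarrow> real" where
  "pc 0 j = 0"
| "pc (Suc k) j = (if j = k then -1/(2*real k+2) else 0) + (2*real k+1)/(2*real k+2) * pc k j"

definition Pk :: "nat \<Rightarrow> real \<Rightarrow> real" where
  "Pk k x = (\<Sum>j<k. pc k j * x ^ (2*j+1))"

definition Gk :: "nat \<Rightarrow> real \<Rightarrow> real" where
  "Gk k a = kap k * a + cos a * Pk k (sin a)"

lemma pc_zero: "k \<le> j \<Longrightarrow> pc k j = 0"
  by (induction k) auto

lemma pc0: "k \<ge> 1 \<Longrightarrow> pc k 0 = - kap k"
proof (induction k)
  case 0 then show ?case by simp
next
  case (Suc k)
  show ?case
  proof (cases "k = 0")
    case True then show ?thesis by simp
  next
    case False then show ?thesis using Suc by simp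
  qed
qed

lemma Pk_Suc: "Pk (Suc k) x = - (x ^ (2*k+1)) / (2*real k+2) + (2*real k+1)/(2*real k+2) * Pk k x"
proof -
  have "Pk (Suc k) x = (\<Sum>j<Suc k. (if j = k then -1/(2*real k+2) else 0) * x ^ (2*j+1)) + (2*real k+1)/(2*real k+2) * (\<Sum>j<Suc k. pc k j * x ^ (2*j+1))"
    unfolding Pk_def pc.simps by (simp only: distrib_right sum.distrib sum_distrib_left mult.assoc)
  also have "(\<Sum>j<Suc k. (if j = k then -1/(2*real k+2) else 0) * x ^ (2*j+1)) = - (x ^ (2*k+1)) / (2*real k+2)"
    by (simp add: if_distrib cong: if_cong)
  also have "(\<Sum>j<Suc k. pc k j * x ^ (2*j+1)) = Pk k x"
    unfolding Pk_def by (simp add: pc_zero)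
  finally show ?thesis .
qed

lemma alg_A: fixes D kap1 kap0 a c X P1 P0 k :: real
  assumes "kap1 = (2*k+1)/D * kap0" "P1 = - X / D + (2*k+1)/D * P0" "D > 0"
  shows "kap1 * a + c * P1 = -(X * c)/D + (2*k+1)/D * (kap0 * a + c * P0)"
  unfolding assms(1,2) using assms(3) by (simp add: field_simps)

lemma alg_B: fixes Q s c D :: real
  assumes c2: "c * c = 1 - s * s" and D: "D = 2*real k+2"
  shows "-((real (2*k+1) * Q * c) * c + (- s) * (s * Q)) / D + (2*real k+1)/D * Q = s * s * Q"
proof -
  have "(real (2*k+1) * Q * c) * c = real (2*k+1) * Q * (c * c)" by (simp only: mult.assoc)
  also have "\<dots> = real (2*k+1) * Q * (1 - s * s)" by (simp only: c2)
  finally have e: "(real (2*k+1) * Q * c) * c + (- s) * (s * Q) = (2*real k+1) * Q - D * (s * s * Q)"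
    unfolding D by (simp add: algebra_simps)
  have "D > 0" unfolding D by simp
  then show ?thesis unfolding e by (simp add: field_simps)
qed

lemma Gk_Suc: "Gk (Suc k) a = -(sin a ^ (2*k+1) * cos a)/(2*real k+2) + (2*real k+1)/(2*real k+2) * Gk k a"
  unfolding Gk_def by (rule alg_A[where k="real k"]) (simp_all add: Pk_Suc kap.simps)

declare kap.simps(2)[simp del] pc.simps(2)[simp del]

lemma Gk_deriv: "(Gk k has_real_derivative (sin a ^ (2*k))) (at a)"
proof (induction k)
  case 0
  show ?case unfolding Gk_def Pk_def by (auto intro!: derivative_eq_intros)
next
  case (Suc k)
  have e: "Gk (Suc k) = (\<lambda>a. -(sin a ^ (2*k+1) * cos a)/(2*real k+2) + (2*real k+1)/(2*real k+2) * Gk k a)"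
    by (rule ext) (simp only: Gk_Suc)
  have d: "((\<lambda>a. -(sin a ^ (2*k+1) * cos a)/(2*real k+2) + (2*real k+1)/(2*real k+2) * Gk k a) has_real_derivative
     (-((real (2*k+1) * sin a ^ (2*k) * cos a) * cos a + (- sin a) * sin a ^ (2*k+1)) / (2*real k+2) + (2*real k+1)/(2*real k+2) * sin a ^ (2*k))) (at a)"
    by (intro DERIV_add DERIV_cdivide DERIV_minus DERIV_cmult DERIV_mult dsin DERIV_cos Suc.IH)
  have c2: "cos a * cos a = 1 - sin a * sin a" using sin_cos_squared_add[of a] by (simp add: power2_eq_square)
  have p1: "sin a ^ (2*k+1) = sin a * sin a ^ (2*k)" by simp
  have p2: "sin a ^ (2 * Suc k) = sin a * sin a * sin a ^ (2*k)" by (simp add: power_add mult_2)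
  have "-((real (2*k+1) * sin a ^ (2*k) * cos a) * cos a + (- sin a) * sin a ^ (2*k+1)) / (2*real k+2) + (2*real k+1)/(2*real k+2) * sin a ^ (2*k)
     = sin a ^ (2 * Suc k)"
    unfolding p1 p2 by (rule alg_B[OF c2 refl])
  then show ?case using d unfolding e by simp
qed



definition Pk' :: "nat \<Rightarrow> real \<Rightarrow> real" where
  "Pk' k x = (\<Sum>j\<in>{1..<k}. pc k j * x ^ (2*j+1))"

lemma Pk_kap: "k \<ge> 1 \<Longrightarrow> Pk k x + kap k * x = Pk' k x"
proof -
  assume k: "k \<ge> 1"
  have "{..<k} = insert 0 {1..<k}" using k by auto
  then have "Pk k x = pc k 0 * x + Pk' k x" unfolding Pk_def Pk'_def by simp
  then show ?thesis using pc0[OF k] by simp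
qed

lemma Pk_odd: "Pk k (-x) = - Pk k x"
  unfolding Pk_def by (simp add: power_minus_odd sum_negf[symmetric])

lemma GI: "Gk k t - Gk k (-t) = 2 * kap k * t + 2 * cos t * Pk k (sin t)"
  unfolding Gk_def by (simp add: Pk_odd)

lemma GJ: "Gk k (-t) - Gk k (t - pi) = kap k * (pi - 2*t) - 2 * cos t * Pk k (sin t)"
  unfolding Gk_def by (simp add: Pk_odd cos_diff sin_diff algebra_simps)

definition Phi2 :: "nat \<Rightarrow> nat \<Rightarrow> real \<Rightarrow> real" where
  "Phi2 l m a = (\<Sum>r\<le>l. real (l choose r) * (-1)^r * Gk (m+1+r) a)"

lemma Phi2_deriv: "(Phi2 l m has_real_derivative (cos a ^ (2*l) * sin a ^ (2*m+1+1))) (at a)"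
proof -
  have d: "(Phi2 l m has_real_derivative (\<Sum>r\<le>l. real (l choose r) * (-1)^r * sin a ^ (2*(m+1+r)))) (at a)"
    unfolding Phi2_def[abs_def]
    by (intro DERIV_sum DERIV_cmult Gk_deriv)
  have "(\<Sum>r\<le>l. real (l choose r) * (-1)^r * sin a ^ (2*(m+1+r)))
     = (\<Sum>r\<le>l. sin a ^ (2*m+2) * (real (l choose r) * (-1)^r * sin a ^ (2*r)))"
    by (intro sum.cong refl) (simp add: power_add)
  also have "\<dots> = sin a ^ (2*m+2) * (\<Sum>r\<le>l. real (l choose r) * (-1)^r * sin a ^ (2*r))"
    by (simp add: sum_distrib_left)
  also have "\<dots> = cos a ^ (2*l) * sin a ^ (2*m+1+1)" by (simp only: cos_pow_even[symmetric]) simp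
  finally show ?thesis using d by simp
qed

definition AA :: "nat \<Rightarrow> nat \<Rightarrow> real" where
  "AA l m = (\<Sum>r\<le>l. real (l choose r) * (-1)^r * kap (m+1+r))"
definition PP :: "nat \<Rightarrow> nat \<Rightarrow> real \<Rightarrow> real" where
  "PP l m x = (\<Sum>r\<le>l. real (l choose r) * (-1)^r * Pk (m+1+r) x)"

lemma Iint_eo:
  assumes h: "h > 0"
  shows "Iint (2*l) (2*m+1) h = h ^ (l+m+1) * (2 * AA l m * thetaA h + 2 * cos (thetaA h) * PP l m (sin (thetaA h)))"
proof -
  define \<theta> where "\<theta> = thetaA h"
  have "Iint (2*l) (2*m+1) h = sqrt h ^ ((2*l)+(2*m+1)+1) * (Phi2 l m \<theta> - Phi2 l m (\<theta> + (-2*\<theta>)))"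
    unfolding Iint_def arcAB_eq \<theta>_def
    by (rule line_int_arc[OF h], rule Phi2_deriv)
  also have "\<theta> + (-2*\<theta>) = - \<theta>" by simp
  also have "sqrt h ^ ((2*l)+(2*m+1)+1) = h ^ (l+m+1)"
  proof -
    have "(2*l)+(2*m+1)+1 = 2*(l+m+1)" by simp
    then show ?thesis using h by (simp only: power_mult) simp
  qed
  also have "Phi2 l m \<theta> - Phi2 l m (- \<theta>) = (\<Sum>r\<le>l. real (l choose r) * (-1)^r * (Gk (m+1+r) \<theta> - Gk (m+1+r) (-\<theta>)))"
    unfolding Phi2_def by (simp add: sum_subtractf[symmetric] algebra_simps)
  also have "\<dots> = (\<Sum>r\<le>l. (2 * \<theta>) * (real (l choose r) * (-1)^r * kap (m+1+r)) + 2 * cos \<theta> * (real (l choose r) * (-1)^r * Pk (m+1+r) (sin \<theta>)))"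
    by (intro sum.cong refl) (simp only: GI algebra_simps)
  also have "\<dots> = 2 * AA l m * \<theta> + 2 * cos \<theta> * PP l m (sin \<theta>)"
    unfolding sum.distrib AA_def PP_def sum_distrib_left[symmetric] by (simp only: mult.commute mult.left_commute)
  finally show ?thesis unfolding \<theta>_def .
qed

lemma Jint_eo:
  assumes h: "h > 0"
  shows "Jint (2*l) (2*m+1) h = h ^ (l+m+1) * (AA l m * (pi - 2 * thetaA h) - 2 * cos (thetaA h) * PP l m (sin (thetaA h)))"
proof -
  define \<theta> where "\<theta> = thetaA h"
  have "Jint (2*l) (2*m+1) h = sqrt h ^ ((2*l)+(2*m+1)+1) * (Phi2 l m (-\<theta>) - Phi2 l m (-\<theta> + -(pi - 2*\<theta>)))"
    unfolding Jint_def arcBC_eq \<theta>_def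
    by (rule line_int_arc[OF h], rule Phi2_deriv)
  also have "-\<theta> + -(pi - 2*\<theta>) = \<theta> - pi" by simp
  also have "sqrt h ^ ((2*l)+(2*m+1)+1) = h ^ (l+m+1)"
  proof -
    have "(2*l)+(2*m+1)+1 = 2*(l+m+1)" by simp
    then show ?thesis using h by (simp only: power_mult) simp
  qed
  also have "Phi2 l m (-\<theta>) - Phi2 l m (\<theta> - pi) = (\<Sum>r\<le>l. real (l choose r) * (-1)^r * (Gk (m+1+r) (-\<theta>) - Gk (m+1+r) (\<theta> - pi)))"
    unfolding Phi2_def by (simp add: sum_subtractf[symmetric] algebra_simps)
  also have "\<dots> = (\<Sum>r\<le>l. (pi - 2 * \<theta>) * (real (l choose r) * (-1)^r * kap (m+1+r)) - 2 * cos \<theta> * (real (l choose r) * (-1)^r * Pk (m+1+r) (sin \<theta>)))"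
    by (intro sum.cong refl) (simp only: GJ algebra_simps)
  also have "\<dots> = AA l m * (pi - 2 * \<theta>) - 2 * cos \<theta> * PP l m (sin \<theta>)"
    unfolding sum_subtractf AA_def PP_def sum_distrib_left[symmetric] by (simp only: mult.commute)
  finally show ?thesis unfolding \<theta>_def .
qed



lemma rem_term:
  assumes h: "h > 0" and j: "j \<le> L"
  shows "h ^ (L+1) * cos (thetaA h) * sin (thetaA h) ^ (2*j+1)
    = ufun h * (wfun h ^ (L+j+1) * (1 + wfun h) ^ (L-j))"
proof -
  define w where "w = wfun h"
  note B = basics[OF h, folded w_def]
  have "h ^ (L+1) = sqrt h ^ (2*(L-j) + 1 + (2*j+1))"
  proof -
    have "2*(L-j) + 1 + (2*j+1) = 2*(L+1)" using j by simp
    then show ?thesis using h by (simp only: power_mult) simp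
  qed
  then have "h ^ (L+1) * cos (thetaA h) * sin (thetaA h) ^ (2*j+1)
     = sqrt h ^ (2*(L-j) + 1 + (2*j+1)) * cos (thetaA h) ^ 1 * sin (thetaA h) ^ (2*j+1)" by simp
  also have "\<dots> = h ^ (L-j) * ufun h ^ 1 * w ^ (2*j+1)"
    by (simp only: sqrt_pow_split[OF less_imp_le[OF h]] B(5) B(6))
  also have "h ^ (L-j) = w ^ (L-j) * (1+w) ^ (L-j)" using B(3) by (metis power_mult_distrib)
  also have "w ^ (L-j) * w ^ (2*j+1) = w ^ (L+j+1)"
  proof -
    have "L-j + (2*j+1) = L+j+1" using j by simp
    then show ?thesis by (metis power_add)
  qed
  then have "w ^ (L-j) * (1+w) ^ (L-j) * ufun h ^ 1 * w ^ (2*j+1) = ufun h * (w ^ (L+j+1) * (1 + w) ^ (L-j))"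
    by (metis (no_types, lifting) mult.assoc mult.commute power_one_right)
  finally show ?thesis unfolding w_def .
qed

definition FF :: "nat \<Rightarrow> nat \<Rightarrow> real \<Rightarrow> real" where
  "FF l m x = (\<Sum>r\<le>l. real (l choose r) * (-1)^r *
      (\<Sum>j\<in>{1..<m+1+r}. pc (m+1+r) j * (x ^ (l+m+j+1) * (1+x) ^ (l+m-j))))"

lemma FF_Cls: "FF l m \<in> Cls 3 (2*l+2*m+1)"
  unfolding FF_def
  apply (rule Cls_sum, simp)
  apply (rule Cls_smult)
  apply (rule Cls_sum, simp)
  apply (rule Cls_smult)
  subgoal for r j
    using Cls_xpow1p[of "l+m+j+1" "l+m-j"] by (auto elim!: Cls_mono)
  done

lemma rem_eq:
  assumes h: "h > 0"
  shows "h ^ (l+m+1) * cos (thetaA h) * (PP l m (sin (thetaA h)) + AA l m * sin (thetaA h)) = ufun h * FF l m (wfun h)"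
proof -
  define s where "s = sin (thetaA h)"
  define c where "c = cos (thetaA h)"
  have "PP l m s + AA l m * s = (\<Sum>r\<le>l. real (l choose r) * (-1)^r * (Pk (m+1+r) s + kap (m+1+r) * s))"
    unfolding PP_def AA_def sum_distrib_right sum.distrib[symmetric] by (simp only: distrib_left mult.assoc)
  also have "\<dots> = (\<Sum>r\<le>l. real (l choose r) * (-1)^r * Pk' (m+1+r) s)"
    by (intro sum.cong refl) (simp only: Pk_kap[of "m+1+r" for r] le_add2)
  finally have E: "PP l m s + AA l m * s = (\<Sum>r\<le>l. real (l choose r) * (-1)^r * Pk' (m+1+r) s)" .
  have "h ^ (l+m+1) * c * (PP l m s + AA l m * s) =
     (\<Sum>r\<le>l. real (l choose r) * (-1)^r * (\<Sum>j\<in>{1..<m+1+r}. pc (m+1+r) j * (h ^ (l+m+1) * c * s ^ (2*j+1))))"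
    unfolding E Pk'_def sum_distrib_left
    by (intro sum.cong refl) (simp only: mult_ac)
  also have "\<dots> = (\<Sum>r\<le>l. real (l choose r) * (-1)^r * (\<Sum>j\<in>{1..<m+1+r}. pc (m+1+r) j * (ufun h * (wfun h ^ (l+m+j+1) * (1 + wfun h) ^ (l+m-j)))))"
  proof (intro sum.cong refl)
    fix r assume r: "r \<in> {..l}"
    have "(\<Sum>j\<in>{1..<m+1+r}. pc (m+1+r) j * (h ^ (l+m+1) * c * s ^ (2*j+1)))
       = (\<Sum>j\<in>{1..<m+1+r}. pc (m+1+r) j * (ufun h * (wfun h ^ (l+m+j+1) * (1 + wfun h) ^ (l+m-j))))"
    proof (intro sum.cong refl)
      fix j assume j: "j \<in> {1..<m+1+r}"
      have "j \<le> l+m" using r j by auto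
      from rem_term[OF h this] show "pc (m+1+r) j * (h ^ (l+m+1) * c * s ^ (2*j+1))
          = pc (m+1+r) j * (ufun h * (wfun h ^ (l+m+j+1) * (1 + wfun h) ^ (l+m-j)))"
        unfolding c_def s_def by simp
    qed
    then show "real (l choose r) * (-1)^r * (\<Sum>j\<in>{1..<m+1+r}. pc (m+1+r) j * (h ^ (l+m+1) * c * s ^ (2*j+1)))
       = real (l choose r) * (-1)^r * (\<Sum>j\<in>{1..<m+1+r}. pc (m+1+r) j * (ufun h * (wfun h ^ (l+m+j+1) * (1 + wfun h) ^ (l+m-j))))"
      by simp
  qed
  also have "\<dots> = ufun h * FF l m (wfun h)"
    unfolding FF_def sum_distrib_left by (intro sum.cong refl) (simp only: mult_ac)
  finally show ?thesis unfolding c_def s_def .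
qed

lemma part2:
  assumes L: "l + m \<ge> 1"
  shows "\<exists>(al::real) (de::real) (phit :: nat \<Rightarrow> real poly) (psit :: nat \<Rightarrow> real poly).
     (\<forall>k\<in>{3..2*l+2*m+1}. degree (phit k) \<le> (2*l+2*m+1 - k) div 2) \<and>
     (\<forall>k\<in>{3..2*l+2*m+1}. degree (psit k) \<le> (2*l+2*m+1 - k) div 2) \<and>
     (\<forall>h::real. h > 0 \<longrightarrow>
        Iint (2*l) (2*m+1) h = al * h ^ ((2*l+2*m+1 - 1) div 2) * Iint 0 1 h
          + (\<Sum>k=3..2*l+2*m+1. poly (phit k) h * wfun h powr (real k + 1/2)) \<and>
        Jint (2*l) (2*m+1) h = de * h ^ ((2*l+2*m+1 - 1) div 2) * Jint 0 1 h
          + (\<Sum>k=3..2*l+2*m+1. poly (psit k) h * wfun h powr (real k + 1/2)))"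
proof -
  have F1: "(\<lambda>x. 2 * FF l m x) \<in> Cls 3 (2*l+2*m+1)" by (rule Cls_smult[OF FF_Cls])
  have F2: "(\<lambda>x. (-2) * FF l m x) \<in> Cls 3 (2*l+2*m+1)" by (rule Cls_smult[OF FF_Cls])
  obtain phi :: "nat \<Rightarrow> real poly" where phi: "\<forall>k. degree (phi k) = 0"
    "\<forall>h>0. ufun h * (2 * FF l m (wfun h)) = (\<Sum>k=3..2*l+2*m+1. poly (phi k) h * wfun h powr (real k + 1/2))"
    using finalize_half[OF F1] by blast
  obtain psi :: "nat \<Rightarrow> real poly" where psi: "\<forall>k. degree (psi k) = 0"
    "\<forall>h>0. ufun h * ((-2) * FF l m (wfun h)) = (\<Sum>k=3..2*l+2*m+1. poly (psi k) h * wfun h powr (real k + 1/2))"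
    using finalize_half[OF F2] by blast
  have A00: "AA 0 0 = 1/2" by (simp add: AA_def kap.simps)
  have P00: "PP 0 0 x = - x / 2" for x by (simp add: PP_def Pk_def pc.simps)
  show ?thesis
  proof (rule exI[of _ "2 * AA l m"], rule exI[of _ "2 * AA l m"], rule exI[of _ phi], rule exI[of _ psi], intro conjI ballI allI impI)
    fix k show "degree (phi k) \<le> (2*l+2*m+1 - k) div 2" using phi(1) by simp
  next
    fix k show "degree (psi k) \<le> (2*l+2*m+1 - k) div 2" using psi(1) by simp
  next
    fix h :: real assume h: "h > 0"
    define \<theta> where "\<theta> = thetaA h"
    have R: "h ^ (l+m+1) * cos \<theta> * (PP l m (sin \<theta>) + AA l m * sin \<theta>) = ufun h * FF l m (wfun h)"
      using rem_eq[OF h] unfolding \<theta>_def .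
    have hL: "h ^ ((2*l+2*m+1 - 1) div 2) * h = h ^ (l+m+1)" by simp
    have I01: "Iint 0 1 h = h * (\<theta> - cos \<theta> * sin \<theta>)"
      using Iint_eo[OF h, of 0 0] unfolding \<theta>_def[symmetric] by (simp add: A00 P00)
    have J01: "Jint 0 1 h = h * ((pi - 2*\<theta>)/2 + cos \<theta> * sin \<theta>)"
      using Jint_eo[OF h, of 0 0] unfolding \<theta>_def[symmetric] by (simp add: A00 P00)
    have "Iint (2*l) (2*m+1) h = 2 * AA l m * h ^ ((2*l+2*m+1 - 1) div 2) * Iint 0 1 h + ufun h * (2 * FF l m (wfun h))"
    proof -
      have "Iint (2*l) (2*m+1) h - 2 * AA l m * h ^ ((2*l+2*m+1 - 1) div 2) * Iint 0 1 h
          = 2 * (h ^ (l+m+1) * cos \<theta> * (PP l m (sin \<theta>) + AA l m * sin \<theta>))"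
        unfolding Iint_eo[OF h] \<theta>_def[symmetric] I01 hL[symmetric] by (simp add: algebra_simps)
      then show ?thesis unfolding R by simp
    qed
    then show "Iint (2*l) (2*m+1) h = 2 * AA l m * h ^ ((2*l+2*m+1 - 1) div 2) * Iint 0 1 h
          + (\<Sum>k=3..2*l+2*m+1. poly (phi k) h * wfun h powr (real k + 1/2))"
      using phi(2) h by simp
    have "Jint (2*l) (2*m+1) h = 2 * AA l m * h ^ ((2*l+2*m+1 - 1) div 2) * Jint 0 1 h + ufun h * ((-2) * FF l m (wfun h))"
    proof -
      have "Jint (2*l) (2*m+1) h - 2 * AA l m * h ^ ((2*l+2*m+1 - 1) div 2) * Jint 0 1 h
          = -2 * (h ^ (l+m+1) * cos \<theta> * (PP l m (sin \<theta>) + AA l m * sin \<theta>))"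
        unfolding Jint_eo[OF h] \<theta>_def[symmetric] J01 hL[symmetric] by (simp add: field_simps)
      then show ?thesis unfolding R by simp
    qed
    then show "Jint (2*l) (2*m+1) h = 2 * AA l m * h ^ ((2*l+2*m+1 - 1) div 2) * Jint 0 1 h
          + (\<Sum>k=3..2*l+2*m+1. poly (psi k) h * wfun h powr (real k + 1/2))"
      using psi(2) h by simp
  qed
qed

theorem lemma2p2:
  fixes l m :: nat
  assumes "l + m \<ge> 1"
  shows "\<exists>(al::real) (be::real) (ga::real) (de::real)
            (phihat :: nat \<Rightarrow> real poly) (phit :: nat \<Rightarrow> real poly)
            (psit :: nat \<Rightarrow> real poly) (psic :: nat \<Rightarrow> real poly).
     (\<forall>k\<in>{2..2*l+2*m}. degree (phihat k) \<le> (2*l+2*m - k) div 2) \<and>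
     (\<forall>k\<in>{3..2*l+2*m+1}. degree (phit k) \<le> (2*l+2*m+1 - k) div 2) \<and>
     (\<forall>k\<in>{3..2*l+2*m+1}. degree (psit k) \<le> (2*l+2*m+1 - k) div 2) \<and>
     (\<forall>k\<in>{4..2*l+2*m+2}. degree (psic k) \<le> (2*l+2*m+2 - k) div 2) \<and>
     (\<forall>h::real. h > 0 \<longrightarrow>
        Jint (2*l) (2*m) h = ga * h ^ ((2*l+2*m) div 2) * Jint 0 0 h
          + (\<Sum>k=2..2*l+2*m. poly (phihat k) h * wfun h powr (real k + 1/2)) \<and>
        Iint (2*l) (2*m+1) h = al * h ^ ((2*l+2*m+1 - 1) div 2) * Iint 0 1 h
          + (\<Sum>k=3..2*l+2*m+1. poly (phit k) h * wfun h powr (real k + 1/2)) \<and>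
        Jint (2*l) (2*m+1) h = de * h ^ ((2*l+2*m+1 - 1) div 2) * Jint 0 1 h
          + (\<Sum>k=3..2*l+2*m+1. poly (psit k) h * wfun h powr (real k + 1/2)) \<and>
        Iint (2*l+1) (2*m+1) h = be * h ^ ((2*l+2*m+2 - 2) div 2) * Iint 1 1 h
          + (\<Sum>k=4..2*l+2*m+2. poly (psic k) h * wfun h ^ k))"
proof -
  obtain ga phihat where P1a: "\<forall>k\<in>{2..2*l+2*m}. degree (phihat k) \<le> (2*l+2*m - k) div 2"
    and P1b: "\<forall>h::real. h > 0 \<longrightarrow> Jint (2*l) (2*m) h = ga * h ^ ((2*l+2*m) div 2) * Jint 0 0 h
          + (\<Sum>k=2..2*l+2*m. poly (phihat k) h * wfun h powr (real k + 1/2))"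
    using part1[OF assms] by blast
  obtain al de phit psit where P2a: "\<forall>k\<in>{3..2*l+2*m+1}. degree (phit k) \<le> (2*l+2*m+1 - k) div 2"
    and P2b: "\<forall>k\<in>{3..2*l+2*m+1}. degree (psit k) \<le> (2*l+2*m+1 - k) div 2"
    and P2c: "\<forall>h::real. h > 0 \<longrightarrow>
        Iint (2*l) (2*m+1) h = al * h ^ ((2*l+2*m+1 - 1) div 2) * Iint 0 1 h
          + (\<Sum>k=3..2*l+2*m+1. poly (phit k) h * wfun h powr (real k + 1/2)) \<and>
        Jint (2*l) (2*m+1) h = de * h ^ ((2*l+2*m+1 - 1) div 2) * Jint 0 1 h
          + (\<Sum>k=3..2*l+2*m+1. poly (psit k) h * wfun h powr (real k + 1/2))"
    using part2[OF assms] by blast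
  obtain be psic where P3a: "\<forall>k\<in>{4..2*l+2*m+2}. degree (psic k) \<le> (2*l+2*m+2 - k) div 2"
    and P3b: "\<forall>h::real. h > 0 \<longrightarrow>
        Iint (2*l+1) (2*m+1) h = be * h ^ ((2*l+2*m+2 - 2) div 2) * Iint 1 1 h
          + (\<Sum>k=4..2*l+2*m+2. poly (psic k) h * wfun h ^ k)"
    using part3[OF assms] by blast
  show ?thesis
    apply (rule exI[of _ al], rule exI[of _ be], rule exI[of _ ga], rule exI[of _ de])
    apply (rule exI[of _ phihat], rule exI[of _ phit], rule exI[of _ psit], rule exI[of _ psic])
    using P1a P1b P2a P2b P2c P3a P3b by blast
qed

end
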